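(* Let $\mathcal{G}=(\mathcal{V},\mathcal{E})$ be a strongly endotactic reaction network in $\mathbb{R}^2$ whose stoichiometric subspace is two-dimensional, and assume that all source complexes of $\mathcal{G}$ lie on the boundary of the convex hull of the set of source complexes. Then there exists a weakly reversible reaction network $\tilde{\mathcal{G}}$ such that $\mathcal{G}\sqsubseteq\tilde{\mathcal{G}}$. Consequently, every two-dimensional strongly endotactic network is effectively extremally weakly reversible.
   Context: A reaction network (E-graph) $\mathcal{G}=(\mathcal{V},\mathcal{E})$ is a finite directed graph whose nodes are distinct elements of a finite set $Y\subset\mathbb{R}^d_{\ge 0}$, with $\mathcal{V}\neq\emptyset$, every node incident to at least one edge, and no edge from a node to itself. For an edge $e$, $\mathbf{s}(e)$ is its source node, $\mathbf{t}(e)$ its target, $\mathbf{v}(e)=\mathbf{t}(e)-\mathbf{s}(e)$; the stoichiometric subspace is $\mathrm{span}\{\mathbf{v}(e):e\in\mathcal{E}\}$; source complexes are $\mathcal{SC}_{\mathcal{G}}=\{\mathbf{s}(e):e\in\mathcal{E}\}$. Given positive rate constants $\mathcal{K}=(k_e)$, $\mathcal{G}$ generates $\mathbf{f}_{\mathcal{G}(\mathcal{K})}(\mathbf{x})=\sum_e k_e\mathbf{x}^{\mathbf{s}(e)}\mathbf{v}(e)$ ($\mathbf{x}^{\mathbf{y}}=\prod_i x_i^{y_i}$, $0^0=1$). $\mathcal{G}\sqsubseteq\tilde{\mathcal{G}}$ means: for every positive rate constants $\mathcal{K}$ for $\mathcal{G}$ there exist positive rate constants $\tilde{\mathcal{K}}$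 for $\tilde{\mathcal{G}}$ with $\mathbf{f}_{\tilde{\mathcal{G}}(\tilde{\mathcal{K}})}=\mathbf{f}_{\mathcal{G}(\mathcal{K})}$ identically. $\mathcal{G}$ is weakly reversible if every edge lies in a directed cycle. $\mathcal{G}$ is strongly endotactic if for every $\mathbf{w}\in\mathbb{R}^d$ and $e_i\in\mathcal{E}$ with $\mathbf{w}\cdot\mathbf{v}(e_i)<0$ there exists $e_j\in\mathcal{E}$ with $\mathbf{w}\cdot(\mathbf{s}(e_j)-\mathbf{s}(e_i))<0$, $\mathbf{w}\cdot\mathbf{v}(e_j)>0$, and $\mathbf{w}\cdot(\mathbf{s}(e_j)-\mathbf{s}(e_k))\le 0$ for all $e_k\in\mathcal{E}$. The extreme source complexes $\mathcal{EC}_{\mathcal{G}}$ are the source complexes on the boundary of the convex hull of $\mathcal{SC}_{\mathcal{G}}$; the extremal reaction set is $\mathcal{EE}_{\mathcal{G}}=\{e\in\mathcal{E}:\mathbf{s}(e)\in\mathcal{EC}_{\mathcal{G}}\}$, and $\mathcal{EV}_{\mathcal{G}}$ is the set of sources and targets of edges in $\mathcal{EE}_{\mathcal{G}}$. $\mathcal{G}$ is extremally weakly reversible if the network $(\mathcal{EV}_{\mathcal{G}},\mathcal{EE}_{\mathcal{G}})$ is weakly reversible. A polynomial system is extremally weakly reversible if it is generated by some extremally weakly reversible network, and a network is effectively extremally weakly reversible if every system it generates (for any positive rate constants) is extremally weakly reversible. *)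

theory Defs
  imports "HOL-Analysis.Analysis"
begin

text \<open>Complexes are vectors in R^n (type real^'n). A reaction network (E-graph) is
  represented by its finite set of edges E (pairs (source, target)); its node set
  is the set of all sources and targets.\<close>

type_synonym ('n) reaction = "(real^('n::finite)) \<times> (real^'n)"

definition nonneg_vec :: "real^('n::finite) \<Rightarrow> bool" where
  "nonneg_vec x \<longleftrightarrow> (\<forall>i. x $ i \<ge> 0)"

definition nodes :: "('n::finite) reaction set \<Rightarrow> (real^'n) set" where
  "nodes E = fst ` E \<union> snd ` E"

definition reaction_network :: "('n::finite) reaction set \<Rightarrow> bool" where
  "reaction_network E \<longleftrightarrow> finite E \<and> E \<noteq> {} \<and>
     (\<forall>e\<in>E. fst e \<noteq> snd e \<and> nonneg_vec (fst e) \<and> nonneg_vec (snd e))"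

definition rvec :: "('n::finite) reaction \<Rightarrow> real^'n" where
  "rvec e = snd e - fst e"

definition stoich_subspace :: "('n::finite) reaction set \<Rightarrow> (real^'n) set" where
  "stoich_subspace E = span (rvec ` E)"

definition source_complexes :: "('n::finite) reaction set \<Rightarrow> (real^'n) set" where
  "source_complexes E = fst ` E"

text \<open>Monomial x^y with the convention 0^0 = 1.\<close>
definition monom :: "real^('n::finite) \<Rightarrow> real^'n \<Rightarrow> real" where
  "monom x y = (\<Prod>i\<in>UNIV. (if y $ i = 0 then 1 else x $ i powr y $ i))"

definition rate_constants :: "('n::finite) reaction set \<Rightarrow> ('n reaction \<Rightarrow> real) \<Rightarrow> bool" where
  "rate_constants E K \<longleftrightarrow> (\<forall>e\<in>E. K e > 0)"

definition gen_system :: "('n::finite) reaction set \<Rightarrow> ('n reaction \<Rightarrow> real) \<Rightarrow> real^'n \<Rightarrow> real^'n" where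
  "gen_system E K x = (\<Sum>e\<in>E. (K e * monom x (fst e)) *\<^sub>R rvec e)"

text \<open>Dynamical equivalence/inclusion G \<sqsubseteq> G' (systems compared on the nonnegative orthant).\<close>
definition realized_by :: "('n::finite) reaction set \<Rightarrow> 'n reaction set \<Rightarrow> bool" where
  "realized_by E E' \<longleftrightarrow> (\<forall>K. rate_constants E K \<longrightarrow>
      (\<exists>K'. rate_constants E' K' \<and>
         (\<forall>x. nonneg_vec x \<longrightarrow> gen_system E' K' x = gen_system E K x)))"

definition weakly_reversible :: "('n::finite) reaction set \<Rightarrow> bool" where
  "weakly_reversible E \<longleftrightarrow> (\<forall>e\<in>E. (snd e, fst e) \<in> E\<^sup>*)"

definition strongly_endotactic :: "('n::finite) reaction set \<Rightarrow> bool" where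
  "strongly_endotactic E \<longleftrightarrow>
    (\<forall>w ei. ei \<in> E \<and> w \<bullet> rvec ei < 0 \<longrightarrow>
       (\<exists>ej\<in>E. w \<bullet> (fst ej - fst ei) < 0 \<and> w \<bullet> rvec ej > 0 \<and>
                (\<forall>ek\<in>E. w \<bullet> (fst ej - fst ek) \<le> 0)))"

definition extreme_complexes :: "('n::finite) reaction set \<Rightarrow> (real^'n) set" where
  "extreme_complexes E = source_complexes E \<inter> frontier (convex hull (source_complexes E))"

definition extremal_reactions :: "('n::finite) reaction set \<Rightarrow> 'n reaction set" where
  "extremal_reactions E = {e\<in>E. fst e \<in> extreme_complexes E}"

text \<open>The network (EV, EE) is weakly reversible; its node set EV is just the
  set of endpoints of EE, so this is weak reversibility of the edge set EE.\<close>
definition extremally_weakly_reversible :: "('n::finite) reaction set \<Rightarrow> bool" where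
  "extremally_weakly_reversible E \<longleftrightarrow> weakly_reversible (extremal_reactions E)"

definition system_extremally_wr :: "(real^('n::finite) \<Rightarrow> real^'n) \<Rightarrow> bool" where
  "system_extremally_wr f \<longleftrightarrow> (\<exists>E K. reaction_network E \<and> rate_constants E K \<and>
      extremally_weakly_reversible E \<and> (\<forall>x. nonneg_vec x \<longrightarrow> gen_system E K x = f x))"

definition effectively_extremally_wr :: "('n::finite) reaction set \<Rightarrow> bool" where
  "effectively_extremally_wr E \<longleftrightarrow>
     (\<forall>K. rate_constants E K \<longrightarrow> system_extremally_wr (gen_system E K))"

end

theory Submission
  imports Defs
begin

definition cr :: "real^2 \<Rightarrow> real^2 \<Rightarrow> real" where
  "cr a b = a$1 * b$2 - a$2 * b$1"

lemma inner2: "(a::real^2) \<bullet> b = a$1 * b$1 + a$2 * b$2"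
  by (simp add: inner_vec_def sum_2)

lemma vec2_eqI: "(x::real^2)$1 = y$1 \<Longrightarrow> x$2 = y$2 \<Longrightarrow> x = y"
  by (simp add: vec_eq_iff forall_2)

lemma cramer2: "cr a b *\<^sub>R x = cr x b *\<^sub>R a + cr a x *\<^sub>R b"
  by (rule vec2_eqI) (simp_all add: cr_def algebra_simps)

lemma cr_self[simp]: "cr a a = 0" by (simp add: cr_def)
lemma cr_anti: "cr a b = - cr b a" by (simp add: cr_def)
lemma cr_scale_right[simp]: "cr a (c *\<^sub>R b) = c * cr a b" by (simp add: cr_def algebra_simps)
lemma cr_scale_left[simp]: "cr (c *\<^sub>R a) b = c * cr a b" by (simp add: cr_def algebra_simps)
lemma cr_add_right: "cr a (b + c) = cr a b + cr a c" by (simp add: cr_def algebra_simps)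
lemma cr_diff_right: "cr a (b - c) = cr a b - cr a c" by (simp add: cr_def algebra_simps)
lemma cr_uminus_right[simp]: "cr a (- b) = - cr a b" by (simp add: cr_def algebra_simps)

definition rot :: "real^2 \<Rightarrow> real^2" where
  "rot n = (\<chi> i. if i = 1 then - (n$2) else n$1)"

lemma rot_comp[simp]: "rot n $ 1 = - (n$2)" "rot n $ 2 = n$1"
  by (simp_all add: rot_def)

lemma rot_inner: "rot n \<bullet> g = cr n g"
  by (simp add: inner2 cr_def)

lemma rot_nz: "n \<noteq> 0 \<Longrightarrow> rot n \<noteq> 0"
  by (metis rot_comp vec2_eqI zero_index neg_equal_0_iff_equal)

lemma parallel_of_cr0:
  assumes "cr n g = 0"
  shows "(n \<bullet> n) *\<^sub>R g = (n \<bullet> g) *\<^sub>R n"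
proof -
  have 1: "(n \<bullet> n) * g$1 - (n \<bullet> g) * n$1 = - n$2 * cr n g"
    unfolding inner2 cr_def by (simp add: algebra_simps)
  have 2: "(n \<bullet> n) * g$2 - (n \<bullet> g) * n$2 = n$1 * cr n g"
    unfolding inner2 cr_def by (simp add: algebra_simps)
  show ?thesis using 1 2 assms by (intro vec2_eqI) auto
qed

lemma perp_parallel:
  assumes "a \<bullet> d = 0" "b \<bullet> d = 0" "d \<noteq> 0"
  shows "cr a b = 0"
proof -
  have "d$1 \<noteq> 0 \<or> d$2 \<noteq> 0" using assms(3) vec2_eqI[of d 0] by auto
  moreover have "cr a b * d$1 = b$2 * (a \<bullet> d) - a$2 * (b \<bullet> d)"
    unfolding inner2 cr_def by (simp add: algebra_simps)
  moreover have "cr a b * d$2 = a$1 * (b \<bullet> d) - b$1 * (a \<bullet> d)"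
    unfolding inner2 cr_def by (simp add: algebra_simps)
  ultimately show ?thesis using assms(1,2) by auto
qed

lemma cr0_zero:
  assumes "cr a b = 0" "a \<bullet> m > 0" "b \<bullet> m = 0"
  shows "b = 0"
proof -
  have e: "a$1 * b$2 = a$2 * b$1" using assms(1) by (simp add: cr_def)
  have "(a \<bullet> m) * b$1 = a$1 * (b \<bullet> m)" unfolding inner2
    by (simp add: algebra_simps) (metis e mult.commute mult.left_commute)
  hence 1: "b$1 = 0" using assms by simp
  have "(a \<bullet> m) * b$2 = a$2 * (b \<bullet> m)" unfolding inner2
    by (simp add: algebra_simps) (metis e mult.commute mult.left_commute)
  hence 2: "b$2 = 0" using assms by simp
  show ?thesis using 1 2 by (intro vec2_eqI) auto
qed

lemma perp_identity:
  assumes "a \<bullet> d = 0"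
  shows "(a \<bullet> a) * (b \<bullet> d) = cr a d * cr a b"
proof -
  have "(a \<bullet> a) * (b \<bullet> d) = (a \<bullet> b) * (a \<bullet> d) + cr a b * cr a d"
    unfolding inner2 cr_def by (simp add: algebra_simps)
  then show ?thesis using assms by simp
qed

lemma g_identity:
  "(z \<bullet> u) * cr z v - (z \<bullet> v) * cr z u = (z \<bullet> z) * cr u v"
  unfolding inner2 cr_def by (simp add: algebra_simps)

definition cone_of :: "(real^2) set \<Rightarrow> real^2 \<Rightarrow> (real^2) set" where
  "cone_of B b = {x. \<exists>l. (\<forall>c. 0 \<le> l c) \<and> x = (\<Sum>c\<in>B. l c *\<^sub>R (c - b))}"

definition usable :: "(real^2) set \<Rightarrow> real^2 \<Rightarrow> real^2 \<Rightarrow> real^2 \<Rightarrow> bool" where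
  "usable B b n c \<longleftrightarrow> (\<exists>l. (\<forall>c. 0 \<le> l c) \<and> n = (\<Sum>c\<in>B. l c *\<^sub>R (c - b)) \<and> 0 < l c)"

lemma cone_add: "x \<in> cone_of B b \<Longrightarrow> y \<in> cone_of B b \<Longrightarrow> x + y \<in> cone_of B b"
proof -
  assume "x \<in> cone_of B b" "y \<in> cone_of B b"
  then obtain l m where l: "\<forall>c. 0 \<le> l c" "x = (\<Sum>c\<in>B. l c *\<^sub>R (c - b))"
    and m: "\<forall>c. 0 \<le> m c" "y = (\<Sum>c\<in>B. m c *\<^sub>R (c - b))" by (auto simp: cone_of_def)
  have "x + y = (\<Sum>c\<in>B. (l c + m c) *\<^sub>R (c - b))"
    by (simp add: l m scaleR_add_left sum.distrib)
  then show ?thesis using l m by (auto simp: cone_of_def intro!: exI[of _ "\<lambda>c. l c + m c"])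
qed

lemma cone_scale: "x \<in> cone_of B b \<Longrightarrow> 0 \<le> t \<Longrightarrow> t *\<^sub>R x \<in> cone_of B b"
proof -
  assume "x \<in> cone_of B b" "0 \<le> t"
  then obtain l where l: "\<forall>c. 0 \<le> l c" "x = (\<Sum>c\<in>B. l c *\<^sub>R (c - b))" by (auto simp: cone_of_def)
  have "t *\<^sub>R x = (\<Sum>c\<in>B. (t * l c) *\<^sub>R (c - b))"
    by (simp add: l scaleR_sum_right)
  then show ?thesis using l \<open>0 \<le> t\<close> by (auto simp: cone_of_def intro!: exI[of _ "\<lambda>c. t * l c"])
qed

lemma cone_zero: "0 \<in> cone_of B b"
  by (auto simp: cone_of_def intro!: exI[of _ "\<lambda>c. 0"])

lemma cone_gen: "finite B \<Longrightarrow> c \<in> B \<Longrightarrow> c - b \<in> cone_of B b"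
proof -
  assume B: "finite B" "c \<in> B"
  have "(\<Sum>c'\<in>B. (if c' = c then 1 else 0) *\<^sub>R (c' - b)) = c - b"
    using B by (subst sum.cong[OF refl, of _ _ "\<lambda>c'. if c' = c then (c' - b) else 0"]) auto
  then show ?thesis by (auto simp: cone_of_def intro!: exI[of _ "\<lambda>c'. if c' = c then 1 else 0"])
qed

lemma cone_eq_hull:
  assumes "finite B"
  shows "cone_of B b = convex_cone hull ((\<lambda>c. c - b) ` B)"
proof
  show "cone_of B b \<subseteq> convex_cone hull ((\<lambda>c. c - b) ` B)"
  proof
    fix x assume "x \<in> cone_of B b"
    then obtain l where l: "\<forall>c. 0 \<le> l c" "x = (\<Sum>c\<in>B. l c *\<^sub>R (c - b))" by (auto simp: cone_of_def)
    have "(\<Sum>c\<in>B'. l c *\<^sub>R (c - b)) \<in> convex_cone hull ((\<lambda>c. c - b) ` B)" if "B' \<subseteq> B" for B'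
    proof -
      have "finite B'" using that assms finite_subset by auto
      then show ?thesis using that
      proof (induction B')
        case empty then show ?case by (simp add: convex_cone_hull_contains_0)
      next
        case (insert a F)
        have "a - b \<in> convex_cone hull ((\<lambda>c. c - b) ` B)"
          using insert.prems by (intro hull_inc) auto
        then have "l a *\<^sub>R (a - b) \<in> convex_cone hull ((\<lambda>c. c - b) ` B)"
          using l(1) convex_cone_hull_mul by blast
        then show ?case using insert by (simp add: convex_cone_hull_add)
      qed
    qed
    then show "x \<in> convex_cone hull ((\<lambda>c. c - b) ` B)" using l by auto
  qed
next
  have "convex_cone (cone_of B b)"
    unfolding convex_cone_def conic_def convex_def
    using cone_zero cone_add cone_scale by blast
  moreover have "(\<lambda>c. c - b) ` B \<subseteq> cone_of B b" using cone_gen assms by auto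
  ultimately show "convex_cone hull ((\<lambda>c. c - b) ` B) \<subseteq> cone_of B b"
    by (simp add: hull_minimal)
qed

lemma farkas:
  assumes "finite B" "x \<notin> cone_of B b"
  shows "\<exists>w. w \<bullet> x < 0 \<and> (\<forall>c\<in>B. 0 \<le> w \<bullet> (c - b))"
proof -
  have cl: "closed (cone_of B b)" using assms(1)
    by (simp add: cone_eq_hull closed_convex_cone_hull)
  have cv: "convex (cone_of B b)" unfolding convex_def
    using cone_add cone_scale by blast
  obtain a \<beta> where a: "a \<bullet> x < \<beta>" "\<forall>y\<in>cone_of B b. a \<bullet> y > \<beta>"
    using separating_hyperplane_closed_point[OF cv cl assms(2)] by blast
  have b0: "\<beta> < 0" using a(2) cone_zero by fastforce
  have "0 \<le> a \<bullet> (c - b)" if c: "c \<in> B" for c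
  proof (rule ccontr)
    assume "\<not> 0 \<le> a \<bullet> (c - b)"
    hence neg: "a \<bullet> (c - b) < 0" by simp
    define t where "t = \<beta> / (a \<bullet> (c - b))"
    have "t \<ge> 0" unfolding t_def using neg b0 by (simp add: divide_nonpos_neg)
    hence "t *\<^sub>R (c - b) \<in> cone_of B b" using cone_scale cone_gen assms(1) c by blast
    hence "a \<bullet> (t *\<^sub>R (c - b)) > \<beta>" using a(2) by blast
    moreover have "a \<bullet> (t *\<^sub>R (c - b)) = \<beta>" unfolding t_def using neg by simp
    ultimately show False by simp
  qed
  then show ?thesis using a(1) b0 by (intro exI[of _ a]) auto
qed

lemma usable_of_sub:
  assumes "finite B" "c \<in> B" "t > 0" "n - t *\<^sub>R (c - b) \<in> cone_of B b"
  shows "usable B b n c"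
proof -
  obtain l where l: "\<forall>c. 0 \<le> l c" "n - t *\<^sub>R (c - b) = (\<Sum>c\<in>B. l c *\<^sub>R (c - b))"
    using assms(4) by (auto simp: cone_of_def)
  define m where "m = (\<lambda>c'. l c' + (if c' = c then t else 0))"
  have "(\<Sum>c'\<in>B. m c' *\<^sub>R (c' - b)) = (\<Sum>c'\<in>B. l c' *\<^sub>R (c' - b)) + (\<Sum>c'\<in>B. (if c' = c then t else 0) *\<^sub>R (c' - b))"
    unfolding m_def by (simp add: scaleR_add_left sum.distrib)
  also have "(\<Sum>c'\<in>B. (if c' = c then t else 0) *\<^sub>R (c' - b)) = t *\<^sub>R (c - b)"
    using assms(1,2) by (subst sum.cong[OF refl, of _ _ "\<lambda>c'. if c' = c then t *\<^sub>R (c' - b) else 0"]) auto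
  finally have "n = (\<Sum>c'\<in>B. m c' *\<^sub>R (c' - b))" using l(2)
    by (metis add.commute diff_add_cancel)
  moreover have "\<forall>c. 0 \<le> m c" using l(1) assms(3) by (simp add: m_def)
  moreover have "0 < m c" using l(1) assms(3) by (simp add: m_def add_nonneg_pos)
  ultimately show ?thesis unfolding usable_def by blast
qed

lemma cross_lemma:
  assumes C: "\<And>x y. x \<in> C \<Longrightarrow> y \<in> C \<Longrightarrow> x + y \<in> C" "\<And>x t. x \<in> C \<Longrightarrow> 0 \<le> t \<Longrightarrow> t *\<^sub>R x \<in> C"
    and n: "n \<in> C" and h: "h \<in> C" and s: "cr n g * cr n h < 0"
  shows "\<exists>t>0. n - t *\<^sub>R g \<in> C"
proof -
  define \<alpha> where "\<alpha> = cr n g"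
  define \<beta> where "\<beta> = cr n h"
  define \<gamma> where "\<gamma> = cr g h"
  have id: "\<gamma> *\<^sub>R n = \<beta> *\<^sub>R g - \<alpha> *\<^sub>R h"
    using cramer2[of g h n] unfolding \<alpha>_def \<beta>_def \<gamma>_def by (simp add: cr_anti[of g n])
  have ab: "\<alpha> * \<beta> < 0" using s unfolding \<alpha>_def \<beta>_def .
  show ?thesis
  proof (cases "\<gamma> \<noteq> 0 \<and> \<beta> / \<gamma> > 0")
    case True
    have "n = inverse \<gamma> *\<^sub>R (\<gamma> *\<^sub>R n)" using True by simp
    also have "\<dots> = (\<beta> / \<gamma>) *\<^sub>R g - (\<alpha> / \<gamma>) *\<^sub>R h"
      unfolding id by (simp add: scaleR_right_diff_distrib divide_inverse mult.commute)
    finally have "n = (\<beta> / \<gamma>) *\<^sub>R g - (\<alpha> / \<gamma>) *\<^sub>R h" .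
    hence "n - (\<beta> / \<gamma>) *\<^sub>R g = (- \<alpha> / \<gamma>) *\<^sub>R h" by (simp add: algebra_simps)
    moreover have "- \<alpha> / \<gamma> \<ge> 0"
    proof -
      have "\<alpha> / \<gamma> * (\<beta> / \<gamma>) = (\<alpha> * \<beta>) / (\<gamma> * \<gamma>)" by simp
      also have "\<dots> < 0" using ab True by (intro divide_neg_pos) (auto simp: zero_less_mult_iff)
      finally have "\<alpha> / \<gamma> * (\<beta> / \<gamma>) < 0" .
      then have "\<alpha> / \<gamma> < 0" using True
        by (metis less_eq_real_def mult_nonneg_nonneg not_less)
      then show ?thesis by simp
    qed
    ultimately show ?thesis using True C(2)[OF h, of "- \<alpha> / \<gamma>"] by (intro exI[of _ "\<beta> / \<gamma>"]) auto
  next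
    case False
    have b0: "\<beta> \<noteq> 0" using ab by auto
    have "\<beta> *\<^sub>R g = \<gamma> *\<^sub>R n + \<alpha> *\<^sub>R h" using id by (simp add: algebra_simps)
    hence "g = inverse \<beta> *\<^sub>R (\<gamma> *\<^sub>R n + \<alpha> *\<^sub>R h)" using b0
      by (metis scaleR_scaleR field_class.field_inverse mult.commute scaleR_one)
    hence "- g = (- \<gamma> / \<beta>) *\<^sub>R n + (- \<alpha> / \<beta>) *\<^sub>R h"
      by (simp add: scaleR_right_distrib divide_inverse mult.commute)
    moreover have "- \<gamma> / \<beta> \<ge> 0"
    proof (cases "\<gamma> = 0")
      case True then show ?thesis by simp
    next
      case g: False
      then have "\<beta> / \<gamma> \<le> 0" using False by simp
      then have "\<gamma> / \<beta> \<le> 0" using g b0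
        by (metis divide_le_0_iff inverse_divide inverse_nonpositive_iff_nonpositive)
      then show ?thesis by simp
    qed
    moreover have "- \<alpha> / \<beta> \<ge> 0"
    proof -
      have "\<alpha> / \<beta> < 0" using ab by (simp add: mult_less_0_iff divide_less_0_iff)
      then show ?thesis by simp
    qed
    ultimately have "- g \<in> C" using C(1)[OF C(2)[OF n, of "- \<gamma> / \<beta>"] C(2)[OF h, of "- \<alpha> / \<beta>"]] by simp
    then have "n + (- g) \<in> C" by (rule C(1)[OF n])
    then have "n - 1 *\<^sub>R g \<in> C" by simp
    then show ?thesis by (intro exI[of _ 1]) auto
  qed
qed

lemma parallel_lemma:
  assumes C: "\<And>x t. x \<in> C \<Longrightarrow> 0 \<le> t \<Longrightarrow> t *\<^sub>R x \<in> C"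
    and n: "n \<in> C" "n \<noteq> 0" and g: "g \<noteq> 0" "cr n g = 0"
  shows "\<exists>t>0. n - t *\<^sub>R g \<in> C"
proof -
  define s where "s = (n \<bullet> g) / (n \<bullet> n)"
  have nn: "n \<bullet> n > 0" using n by simp
  have "g = inverse (n \<bullet> n) *\<^sub>R ((n \<bullet> n) *\<^sub>R g)" using nn by simp
  hence gs: "g = s *\<^sub>R n" unfolding parallel_of_cr0[OF g(2)] s_def
    by (simp add: divide_inverse mult.commute)
  have s0: "s \<noteq> 0" using gs g by auto
  define t where "t = 1 / (2 * \<bar>s\<bar>)"
  have t: "t > 0" using s0 by (simp add: t_def)
  have "t * s \<le> t * \<bar>s\<bar>" using t by (intro mult_left_mono) auto
  also have "t * \<bar>s\<bar> = 1/2" using s0 unfolding t_def by simp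
  finally have "1 - t * s \<ge> 0" by simp
  moreover have "n - t *\<^sub>R g = (1 - t * s) *\<^sub>R n" using gs by (simp add: algebra_simps)
  ultimately show ?thesis using C[OF n(1), of "1 - t * s"] t by (intro exI[of _ t]) auto
qed

lemma averaging:
  assumes B: "finite B" and n: "n \<in> cone_of B b"
  shows "\<exists>l. (\<forall>c. 0 \<le> l c) \<and> n = (\<Sum>c\<in>B. l c *\<^sub>R (c - b)) \<and>
             (\<forall>c\<in>B. c \<noteq> b \<longrightarrow> (0 < l c \<longleftrightarrow> usable B b n c))"
proof -
  define U where "U = {c\<in>B. c \<noteq> b \<and> usable B b n c}"
  show ?thesis
  proof (cases "U = {}")
    case True
    obtain l where l: "\<forall>c. 0 \<le> l c" "n = (\<Sum>c\<in>B. l c *\<^sub>R (c - b))"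
      using n by (auto simp: cone_of_def)
    have "\<forall>c\<in>B. c \<noteq> b \<longrightarrow> (0 < l c \<longleftrightarrow> usable B b n c)"
    proof (intro ballI impI)
      fix c assume c: "c \<in> B" "c \<noteq> b"
      have "\<not> usable B b n c" using True c unfolding U_def by blast
      moreover have "0 < l c \<Longrightarrow> usable B b n c" unfolding usable_def using l by blast
      ultimately show "0 < l c \<longleftrightarrow> usable B b n c" by blast
    qed
    then show ?thesis using l by blast
  next
    case False
    have fU: "finite U" using B unfolding U_def by auto
    define L where "L = (\<lambda>c. SOME l. (\<forall>c. 0 \<le> l c) \<and> n = (\<Sum>c\<in>B. l c *\<^sub>R (c - b)) \<and> 0 < l c)"
    have L: "(\<forall>c'. 0 \<le> L c c') \<and> n = (\<Sum>c'\<in>B. L c c' *\<^sub>R (c' - b)) \<and> 0 < L c c" if "c \<in> U" for c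
    proof -
      have "usable B b n c" using that unfolding U_def by blast
      then show ?thesis unfolding usable_def L_def by (rule someI_ex)
    qed
    define m where "m = real (card U)"
    have m0: "m > 0" using False fU by (simp add: m_def card_gt_0_iff)
    define lam where "lam = (\<lambda>c'. (\<Sum>c\<in>U. L c c') / m)"
    have nonneg: "\<forall>c. 0 \<le> lam c" unfolding lam_def using L m0
      by (auto intro!: divide_nonneg_pos sum_nonneg)
    have "(\<Sum>c'\<in>B. lam c' *\<^sub>R (c' - b)) = (1 / m) *\<^sub>R (\<Sum>c'\<in>B. \<Sum>c\<in>U. L c c' *\<^sub>R (c' - b))"
    proof -
      have eq: "lam c' *\<^sub>R (c' - b) = (1 / m) *\<^sub>R (\<Sum>c\<in>U. L c c' *\<^sub>R (c' - b))" for c'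
      proof -
        have "lam c' *\<^sub>R (c' - b) = (1 / m) *\<^sub>R ((\<Sum>c\<in>U. L c c') *\<^sub>R (c' - b))"
          unfolding lam_def by simp
        also have "(\<Sum>c\<in>U. L c c') *\<^sub>R (c' - b) = (\<Sum>c\<in>U. L c c' *\<^sub>R (c' - b))"
          by (rule scaleR_sum_left)
        finally show ?thesis .
      qed
      show ?thesis unfolding eq by (simp add: scaleR_sum_right)
    qed
    also have "(\<Sum>c'\<in>B. \<Sum>c\<in>U. L c c' *\<^sub>R (c' - b)) = (\<Sum>c\<in>U. \<Sum>c'\<in>B. L c c' *\<^sub>R (c' - b))"
      by (rule sum.swap)
    also have "\<dots> = (\<Sum>c\<in>U. n)"
    proof (rule sum.cong[OF refl])
      fix c assume "c \<in> U"
      then show "(\<Sum>c'\<in>B. L c c' *\<^sub>R (c' - b)) = n" using L[of c] by simp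
    qed
    also have "\<dots> = m *\<^sub>R n" unfolding m_def by (rule sum_constant_scaleR)
    finally have rep: "n = (\<Sum>c'\<in>B. lam c' *\<^sub>R (c' - b))" using m0 by simp
    have pos: "(0 < lam c \<longleftrightarrow> usable B b n c)" if c: "c \<in> B" "c \<noteq> b" for c
    proof
      assume u: "usable B b n c"
      then have cU: "c \<in> U" using c unfolding U_def by blast
      have "0 < L c c" using L[OF cU] by blast
      also have "L c c \<le> (\<Sum>c''\<in>U. L c'' c)"
        using fU cU L by (intro member_le_sum) auto
      finally show "0 < lam c" unfolding lam_def using m0 by simp
    next
      assume "0 < lam c"
      then have "(\<Sum>c''\<in>U. L c'' c) \<noteq> 0" unfolding lam_def by auto
      then obtain c'' where c'': "c'' \<in> U" "L c'' c \<noteq> 0" by (meson sum.neutral)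
      have "0 \<le> L c'' c" using L[OF c''(1)] by blast
      then have "0 < L c'' c" using c''(2) by linarith
      then show "usable B b n c" unfolding usable_def using L[OF c''(1)] by blast
    qed
    show ?thesis using nonneg rep pos by blast
  qed
qed

lemma char:
  assumes B: "finite B" and n: "n \<in> cone_of B b" and c: "c \<in> B" "c \<noteq> b"
  shows "usable B b n c \<longleftrightarrow> (\<forall>w. (\<forall>c'\<in>B. 0 \<le> w \<bullet> (c' - b)) \<longrightarrow> w \<bullet> n = 0 \<longrightarrow> w \<bullet> (c - b) = 0)"
proof
  assume "usable B b n c"
  then obtain l where l: "\<forall>c. 0 \<le> l c" "n = (\<Sum>c\<in>B. l c *\<^sub>R (c - b))" "0 < l c"
    unfolding usable_def by blast
  show "\<forall>w. (\<forall>c'\<in>B. 0 \<le> w \<bullet> (c' - b)) \<longrightarrow> w \<bullet> n = 0 \<longrightarrow> w \<bullet> (c - b) = 0"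
  proof (intro allI impI)
    fix w assume w: "\<forall>c'\<in>B. 0 \<le> w \<bullet> (c' - b)" "w \<bullet> n = 0"
    have "w \<bullet> n = (\<Sum>c'\<in>B. l c' * (w \<bullet> (c' - b)))" unfolding l(2)
      by (simp add: inner_sum_right)
    then have "(\<Sum>c'\<in>B. l c' * (w \<bullet> (c' - b))) = 0" using w by simp
    moreover have "\<forall>c'\<in>B. 0 \<le> l c' * (w \<bullet> (c' - b))" using w l by simp
    ultimately have "\<forall>c'\<in>B. l c' * (w \<bullet> (c' - b)) = 0"
      using sum_nonneg_eq_0_iff[OF B, of "\<lambda>c'. l c' * (w \<bullet> (c' - b))"] by simp
    then have "l c * (w \<bullet> (c - b)) = 0" using c by blast
    then show "w \<bullet> (c - b) = 0" using l(3) by simp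
  qed
next
  assume H: "\<forall>w. (\<forall>c'\<in>B. 0 \<le> w \<bullet> (c' - b)) \<longrightarrow> w \<bullet> n = 0 \<longrightarrow> w \<bullet> (c - b) = 0"
  have C1: "\<And>x y. x \<in> cone_of B b \<Longrightarrow> y \<in> cone_of B b \<Longrightarrow> x + y \<in> cone_of B b" by (rule cone_add)
  have C2: "\<And>x t. x \<in> cone_of B b \<Longrightarrow> 0 \<le> t \<Longrightarrow> t *\<^sub>R x \<in> cone_of B b" by (rule cone_scale)
  have g0: "c - b \<noteq> 0" using c by simp
  show "usable B b n c"
  proof (cases "n = 0")
    case True
    have "- (c - b) \<in> cone_of B b"
    proof (rule ccontr)
      assume "- (c - b) \<notin> cone_of B b"
      then obtain w where w: "w \<bullet> (- (c - b)) < 0" "\<forall>c'\<in>B. 0 \<le> w \<bullet> (c' - b)"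
        using farkas[OF B] by blast
      then have "w \<bullet> (c - b) = 0" using H True by simp
      moreover have "w \<bullet> (- (c - b)) = - (w \<bullet> (c - b))" by (rule inner_minus_right)
      ultimately show False using w(1) by linarith
    qed
    then have "n - 1 *\<^sub>R (c - b) \<in> cone_of B b" using True by simp
    then show ?thesis using usable_of_sub[OF B c(1), of 1 n b] by simp
  next
    case nz: False
    consider "cr n (c - b) = 0" | "cr n (c - b) > 0" | "cr n (c - b) < 0" by linarith
    then have "\<exists>t>0. n - t *\<^sub>R (c - b) \<in> cone_of B b"
    proof cases
      case 1
      show ?thesis by (rule parallel_lemma[OF C2 n nz g0 1])
    next
      case 2
      have "rot n \<bullet> n = 0" by (simp add: rot_inner)
      moreover have "rot n \<bullet> (c - b) \<noteq> 0" using 2 by (simp add: rot_inner)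
      ultimately have "\<not> (\<forall>c'\<in>B. 0 \<le> rot n \<bullet> (c' - b))" using H by blast
      then obtain c' where c': "c' \<in> B" "rot n \<bullet> (c' - b) < 0" by (auto simp: not_le)
      have h: "c' - b \<in> cone_of B b" by (rule cone_gen[OF B c'(1)])
      have "cr n (c - b) * cr n (c' - b) < 0" using 2 c'(2) by (simp add: rot_inner mult_pos_neg)
      then show ?thesis using cross_lemma[OF C1 C2 n h] by blast
    next
      case 3
      have "(- rot n) \<bullet> n = 0" by (simp add: rot_inner)
      moreover have "(- rot n) \<bullet> (c - b) \<noteq> 0" using 3 by (simp add: rot_inner)
      ultimately have "\<not> (\<forall>c'\<in>B. 0 \<le> (- rot n) \<bullet> (c' - b))" using H by blast
      then obtain c' where c': "c' \<in> B" "(- rot n) \<bullet> (c' - b) < 0" by (auto simp: not_le)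
      have h: "c' - b \<in> cone_of B b" by (rule cone_gen[OF B c'(1)])
      have "cr n (c - b) * cr n (c' - b) < 0" using 3 c'(2) by (simp add: rot_inner mult_neg_pos)
      then show ?thesis using cross_lemma[OF C1 C2 n h] by blast
    qed
    then obtain t where "t > 0" "n - t *\<^sub>R (c - b) \<in> cone_of B b" by blast
    then show ?thesis using usable_of_sub[OF B c(1)] by blast
  qed
qed

lemma periodic_mult:
  fixes ws :: "nat \<Rightarrow> 'a" and m :: nat
  assumes "\<forall>k\<ge>i. ws (k + p) = ws k" "k \<ge> i"
  shows "ws (k + m * p) = ws k"
proof (induction m)
  case 0 then show ?case by simp
next
  case (Suc m)
  have "ws (k + Suc m * p) = ws ((k + m * p) + p)" by (simp add: algebra_simps)
  also have "\<dots> = ws (k + m * p)" using assms by simp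
  finally show ?case using Suc by simp
qed

lemma covering_pos:
  fixes ws :: "nat \<Rightarrow> real^2"
  assumes per: "\<forall>k\<ge>i. ws (k + p) = ws k" and p: "p > 0"
    and rt: "\<forall>k. cr (ws k) (ws (Suc k)) > 0"
    and z: "z \<noteq> 0"
  shows "\<exists>k\<ge>i. \<exists>\<alpha> \<beta>. \<alpha> \<ge> 0 \<and> \<beta> \<ge> 0 \<and> z = \<alpha> *\<^sub>R ws k + \<beta> *\<^sub>R ws (Suc k)"
proof (rule ccontr)
  assume N: "\<not> ?thesis"
  define f where "f k = cr z (ws k)" for k
  have T1: "f (Suc k) \<le> 0" if k: "k \<ge> i" "f k \<le> 0" for k
  proof (rule ccontr)
    assume "\<not> f (Suc k) \<le> 0"
    hence fs: "f (Suc k) > 0" by simp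
    define \<gamma> where "\<gamma> = cr (ws k) (ws (Suc k))"
    have g: "\<gamma> > 0" using rt unfolding \<gamma>_def by blast
    have "\<gamma> *\<^sub>R z = f (Suc k) *\<^sub>R ws k + cr (ws k) z *\<^sub>R ws (Suc k)"
      unfolding \<gamma>_def f_def by (rule cramer2)
    hence "z = (f (Suc k) / \<gamma>) *\<^sub>R ws k + (cr (ws k) z / \<gamma>) *\<^sub>R ws (Suc k)"
      using g by (metis (no_types, lifting) divide_inverse_commute less_irrefl scaleR_right_distrib
          scaleR_scaleR field_class.field_inverse scaleR_one mult.commute)
    moreover have "f (Suc k) / \<gamma> \<ge> 0" using fs g by simp
    moreover have "cr (ws k) z / \<gamma> \<ge> 0" using k g by (simp add: f_def cr_anti[of z])
    ultimately show False using N k by blast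
  qed
  have T1': "\<forall>j\<ge>k. f j \<le> 0" if "k \<ge> i" "f k \<le> 0" for k
  proof (intro allI impI)
    fix j assume "j \<ge> k"
    then show "f j \<le> 0"
    proof (induction j rule: dec_induct)
      case base then show ?case using that by simp
    next
      case (step j) then show ?case using T1 that by simp
    qed
  qed
  have fper: "f (k + m * p) = f k" if "k \<ge> i" for k m
    unfolding f_def using periodic_mult[OF per that] by simp
  have dich: "(\<forall>k\<ge>i. f k > 0) \<or> (\<forall>k\<ge>i. f k \<le> 0)"
  proof (cases "\<exists>k\<ge>i. f k \<le> 0")
    case True
    then obtain k where k: "k \<ge> i" "f k \<le> 0" by blast
    have "f j \<le> 0" if "j \<ge> i" for j
    proof -
      have "j + k * p \<ge> k" using p by (simp add: trans_le_add2)
      then have "f (j + k * p) \<le> 0" using T1'[OF k] by blast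
      then show ?thesis using fper[OF that] by simp
    qed
    then show ?thesis by blast
  next
    case False then show ?thesis by auto
  qed
  have nz: "f k \<noteq> 0" if k: "k \<ge> i" for k
  proof
    assume f0: "f k = 0"
    from dich have allneg: "\<forall>k\<ge>i. f k \<le> 0" using f0 k by force
    define j where "j = k + p - 1"
    have jk: "Suc j = k + 1 * p" using p by (simp add: j_def)
    have ji: "j \<ge> i" using k p by (simp add: j_def)
    have fj1: "f (Suc j) = 0" using jk fper[OF k, of 1] f0 by simp
    have wsj: "ws (Suc j) = ws k" using jk periodic_mult[OF per k, of 1] by simp
    define a where "a = ws j"
    define b where "b = ws (Suc j)"
    have ab: "cr a b > 0" using rt unfolding a_def b_def by blast
    have zb: "cr z b = 0" using fj1 unfolding f_def b_def .
    have par: "(z \<bullet> z) *\<^sub>R b = (z \<bullet> b) *\<^sub>R z" by (rule parallel_of_cr0[OF zb])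
    have zz: "z \<bullet> z > 0" using z by simp
    have "(z \<bullet> z) * cr a b = (z \<bullet> b) * cr a z"
      using arg_cong[OF par, of "cr a"] by simp
    also have "\<dots> = - (z \<bullet> b) * f j" unfolding f_def a_def by (simp add: cr_anti[of z])
    finally have "- (z \<bullet> b) * f j > 0" using ab zz by (metis mult_pos_pos)
    moreover have "f j \<le> 0" using allneg ji by blast
    ultimately have zbp: "z \<bullet> b > 0"
      by (metis less_eq_real_def minus_mult_minus mult_minus_left mult_pos_pos mult_nonneg_nonpos
          mult_nonpos_nonpos neg_0_less_iff_less not_less mult_zero_left)
    have "z = ((z \<bullet> z) / (z \<bullet> b)) *\<^sub>R b"
    proof -
      have "((z \<bullet> z) / (z \<bullet> b)) *\<^sub>R b = inverse (z \<bullet> b) *\<^sub>R ((z \<bullet> z) *\<^sub>R b)"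
        by (simp add: divide_inverse mult.commute)
      also have "\<dots> = z" unfolding par using zbp by simp
      finally show ?thesis by simp
    qed
    then have "z = 0 *\<^sub>R ws j + ((z \<bullet> z) / (z \<bullet> b)) *\<^sub>R ws (Suc j)" by (simp add: b_def)
    moreover have "(z \<bullet> z) / (z \<bullet> b) \<ge> 0" using zz zbp by simp
    ultimately show False using N ji by force
  qed
  define g where "g k = (z \<bullet> ws k) / f k" for k
  have same: "f k * f (Suc k) > 0" if "k \<ge> i" for k
  proof -
    have "f k \<noteq> 0" "f (Suc k) \<noteq> 0" using nz that by auto
    then show ?thesis using dich that
      by (metis le_SucI mult_neg_neg mult_pos_pos not_le order_le_less)
  qed
  have dec: "g (Suc k) < g k" if "k \<ge> i" for k
  proof -
    have ff: "f k * f (Suc k) > 0" using same that .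
    have nk: "f k \<noteq> 0" "f (Suc k) \<noteq> 0" using ff by auto
    have "g k - g (Suc k) = ((z \<bullet> ws k) * f (Suc k) - (z \<bullet> ws (Suc k)) * f k) / (f k * f (Suc k))"
      unfolding g_def using nk by (simp add: field_simps)
    also have "\<dots> = (z \<bullet> z) * cr (ws k) (ws (Suc k)) / (f k * f (Suc k))"
      unfolding f_def by (simp add: g_identity)
    also have "\<dots> > 0" using ff rt z by (intro divide_pos_pos) (simp_all add: mult_pos_pos)
    finally show ?thesis by simp
  qed
  have "g (i + Suc m) < g i" for m
  proof (induction m)
    case 0 then show ?case using dec[of i] by simp
  next
    case (Suc m) then show ?case using dec[of "i + Suc m"] by simp
  qed
  then have "g (i + p) < g i" using p by (metis Suc_pred)
  moreover have "g (i + p) = g i" unfolding g_def f_def using per by simp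
  ultimately show False by simp
qed

definition refl2 :: "real^2 \<Rightarrow> real^2" where
  "refl2 v = (\<chi> j. if j = 1 then v$1 else - (v$2))"

lemma refl2_comp[simp]: "refl2 v $ 1 = v$1" "refl2 v $ 2 = - (v$2)"
  by (simp_all add: refl2_def)

lemma cr_refl2: "cr (refl2 a) (refl2 b) = - cr a b"
  by (simp add: cr_def)

lemma refl2_inv[simp]: "refl2 (refl2 v) = v"
  by (rule vec2_eqI) simp_all

lemma refl2_lin: "refl2 (\<alpha> *\<^sub>R a + \<beta> *\<^sub>R b) = \<alpha> *\<^sub>R refl2 a + \<beta> *\<^sub>R refl2 b"
  by (rule vec2_eqI) simp_all

lemma refl2_zero: "refl2 0 = 0"
  by (rule vec2_eqI) simp_all

lemma refl2_nz: "z \<noteq> 0 \<Longrightarrow> refl2 z \<noteq> 0"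
  by (metis refl2_inv refl2_zero)

lemma covering:
  fixes ws :: "nat \<Rightarrow> real^2"
  assumes per: "\<forall>k\<ge>i. ws (k + p) = ws k" and p: "p > 0"
    and rt: "(\<forall>k. cr (ws k) (ws (Suc k)) > 0) \<or> (\<forall>k. cr (ws k) (ws (Suc k)) < 0)"
    and z: "z \<noteq> 0"
  shows "\<exists>k\<ge>i. \<exists>\<alpha> \<beta>. \<alpha> \<ge> 0 \<and> \<beta> \<ge> 0 \<and> z = \<alpha> *\<^sub>R ws k + \<beta> *\<^sub>R ws (Suc k)"
  using rt
proof
  assume "\<forall>k. cr (ws k) (ws (Suc k)) > 0"
  then show ?thesis using covering_pos[OF per p _ z] by blast
next
  assume neg: "\<forall>k. cr (ws k) (ws (Suc k)) < 0"
  define ws' where "ws' k = refl2 (ws k)" for k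
  have per': "\<forall>k\<ge>i. ws' (k + p) = ws' k" using per by (simp add: ws'_def)
  have rt': "\<forall>k. cr (ws' k) (ws' (Suc k)) > 0" using neg by (simp add: ws'_def cr_refl2)
  obtain k \<alpha> \<beta> where k: "k \<ge> i" "\<alpha> \<ge> 0" "\<beta> \<ge> 0" "refl2 z = \<alpha> *\<^sub>R ws' k + \<beta> *\<^sub>R ws' (Suc k)"
    using covering_pos[OF per' p rt' refl2_nz[OF z]] by blast
  have "z = refl2 (refl2 z)" by simp
  also have "\<dots> = \<alpha> *\<^sub>R ws k + \<beta> *\<^sub>R ws (Suc k)" unfolding k(4) ws'_def refl2_lin by simp
  finally show ?thesis using k by blast
qed

lemma char_ex:
  assumes B: "finite B" and n: "n \<in> cone_of B b" and c: "c \<in> B" "c \<noteq> b"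
    and nu: "\<not> usable B b n c"
  shows "\<exists>w. (\<forall>c'\<in>B. 0 \<le> w \<bullet> (c' - b)) \<and> w \<bullet> n = 0 \<and> w \<bullet> (c - b) \<noteq> 0"
  using char[OF B n c] nu by blast

lemma wr_graph:
  fixes n :: "real^2 \<Rightarrow> real^2"
  assumes B: "finite B"
    and nz: "\<forall>x\<in>B. n x \<noteq> 0"
    and mem: "\<forall>x\<in>B. n x \<in> cone_of B x"
    and P2: "\<forall>w. w \<noteq> 0 \<longrightarrow> (\<exists>u\<in>B. (\<forall>c\<in>B. w \<bullet> u \<le> w \<bullet> c) \<and> w \<bullet> n u > 0)"
    and H2: "\<forall>y\<in>B. \<exists>w. w \<noteq> 0 \<and> (\<forall>c\<in>B. w \<bullet> y \<le> w \<bullet> c)"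
    and G: "G = {(x,c). x \<in> B \<and> c \<in> B \<and> c \<noteq> x \<and> usable B x (n x) c}"
    and x0: "x0 \<in> B" and y: "y \<in> B"
  shows "(x0, y) \<in> G\<^sup>*"
proof (rule ccontr)
  assume ny: "(x0, y) \<notin> G\<^sup>*"
  define X where "X = {c\<in>B. (x0, c) \<in> G\<^sup>*}"
  have yX: "y \<notin> X" using ny unfolding X_def by blast
  have XB: "X \<subseteq> B" unfolding X_def by blast
  have x0X: "x0 \<in> X" using x0 unfolding X_def by blast
  have clo: "c \<in> X" if "x \<in> X" "c \<in> B" "c \<noteq> x" "usable B x (n x) c" for x c
  proof -
    have "(x, c) \<in> G" using that XB G by blast
    then show ?thesis using that(1,2) unfolding X_def by (blast intro: rtrancl_into_rtrancl)
  qed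
  define PW where "PW x w \<longleftrightarrow> w \<noteq> 0 \<and> w \<bullet> n x = 0 \<and> (\<forall>c\<in>B. w \<bullet> x \<le> w \<bullet> c) \<and>
      (\<forall>c\<in>B. w \<bullet> c = w \<bullet> x \<longrightarrow> c \<in> X)" for x w
  have claimA: "\<exists>w. PW x w" if xX: "x \<in> X" for x
  proof -
    have xB: "x \<in> B" using xX XB by blast
    have yx: "y \<noteq> x" using xX yX by blast
    have "\<not> usable B x (n x) y" using clo[OF xX y yx] yX by blast
    then obtain w where w: "\<forall>c'\<in>B. 0 \<le> w \<bullet> (c' - x)" "w \<bullet> n x = 0" "w \<bullet> (y - x) \<noteq> 0"
      using char_ex[OF B mem[rule_format, OF xB] y yx] by blast
    have w0: "w \<noteq> 0" using w(3) by auto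
    have wmin: "\<forall>c\<in>B. w \<bullet> x \<le> w \<bullet> c" using w(1) by (simp add: inner_diff_right)
    have F: "c \<in> X" if c: "c \<in> B" "w \<bullet> c = w \<bullet> x" for c
    proof (cases "c = x")
      case True then show ?thesis using xX by simp
    next
      case False
      have "usable B x (n x) c"
      proof (subst char[OF B mem[rule_format, OF xB] c(1) False], intro allI impI)
        fix w' assume w': "\<forall>c'\<in>B. 0 \<le> w' \<bullet> (c' - x)" "w' \<bullet> n x = 0"
        have "cr w w' = 0" by (rule perp_parallel[OF w(2) w'(2) nz[rule_format, OF xB]])
        then have par: "(w \<bullet> w) *\<^sub>R w' = (w \<bullet> w') *\<^sub>R w" by (rule parallel_of_cr0)
        have "(w \<bullet> w) * (w' \<bullet> (c - x)) = (w \<bullet> w') * (w \<bullet> (c - x))"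
          using arg_cong[OF par, of "\<lambda>v. v \<bullet> (c - x)"] by simp
        also have "w \<bullet> (c - x) = 0" using c(2) by (simp add: inner_diff_right)
        finally show "w' \<bullet> (c - x) = 0" using w0 by simp
      qed
      then show ?thesis using clo[OF xX c(1) False] by blast
    qed
    show ?thesis unfolding PW_def using w0 w(2) wmin F by blast
  qed
  define W where "W x = (SOME w. PW x w)" for x
  have W: "PW x (W x)" if "x \<in> X" for x
    unfolding W_def using claimA[OF that] by (rule someI_ex)
  define Q where "Q x u \<longleftrightarrow> u \<in> B \<and> (\<forall>c\<in>B. W x \<bullet> u \<le> W x \<bullet> c) \<and> W x \<bullet> n u > 0" for x u
  have exQ: "\<exists>u. Q x u" if "x \<in> X" for x
    using P2 W[OF that] unfolding PW_def Q_def by blast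
  define f where "f x = (SOME u. Q x u)" for x
  have fQ: "Q x (f x)" if "x \<in> X" for x
    unfolding f_def using exQ[OF that] by (rule someI_ex)
  have fX: "f x \<in> X" if xX: "x \<in> X" for x
  proof -
    have xB: "x \<in> B" using xX XB by blast
    have q: "Q x (f x)" using fQ[OF xX] .
    have "W x \<bullet> f x \<le> W x \<bullet> x" using q xB unfolding Q_def by blast
    moreover have "W x \<bullet> x \<le> W x \<bullet> f x" using W[OF xX] q unfolding PW_def Q_def by blast
    ultimately have "W x \<bullet> f x = W x \<bullet> x" by simp
    then show ?thesis using W[OF xX] q unfolding PW_def Q_def by blast
  qed
  define xs where "xs k = (f ^^ k) x0" for k
  have xsS: "xs (Suc k) = f (xs k)" for k by (simp add: xs_def)
  have xsX: "xs k \<in> X" for k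
    by (induction k) (auto simp: xs_def x0X fX)
  have xsB: "xs k \<in> B" for k using xsX XB by blast
  define ws where "ws k = W (xs k)" for k
  have a1: "ws k \<noteq> 0" and a2: "ws k \<bullet> n (xs k) = 0" and a3: "\<forall>c\<in>B. ws k \<bullet> xs k \<le> ws k \<bullet> c"
    and a4: "\<forall>c\<in>B. ws k \<bullet> c = ws k \<bullet> xs k \<longrightarrow> c \<in> X" for k
    using W[OF xsX[of k]] unfolding PW_def ws_def by blast+
  have b2: "\<forall>c\<in>B. ws k \<bullet> xs (Suc k) \<le> ws k \<bullet> c" and b3: "ws k \<bullet> n (xs (Suc k)) > 0" for k
    using fQ[OF xsX[of k]] unfolding Q_def ws_def xsS by blast+
  have c0: "ws k \<bullet> (xs (Suc k) - xs k) = 0" for k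
  proof -
    have "ws k \<bullet> xs (Suc k) \<le> ws k \<bullet> xs k" using b2 xsB by blast
    moreover have "ws k \<bullet> xs k \<le> ws k \<bullet> xs (Suc k)" using a3 xsB by blast
    ultimately show ?thesis by (simp add: inner_diff_right)
  qed
  have d0: "xs (Suc k) - xs k \<noteq> 0" for k
  proof
    assume "xs (Suc k) - xs k = 0"
    then have "xs (Suc k) = xs k" by simp
    then show False using a2[of k] b3[of k] by simp
  qed
  have nopar: "False" if "cr (ws k) (ws (Suc k)) = 0" for k
    using cr0_zero[OF that b3[of k] a2[of "Suc k"]] a1[of "Suc k"] by blast
  have e1: "ws (Suc k) \<bullet> (xs (Suc k) - xs k) < 0" for k
  proof -
    have "ws (Suc k) \<bullet> xs (Suc k) \<le> ws (Suc k) \<bullet> xs k" using a3[of "Suc k"] xsB by blast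
    then have le: "ws (Suc k) \<bullet> (xs (Suc k) - xs k) \<le> 0" by (simp add: inner_diff_right)
    have "ws (Suc k) \<bullet> (xs (Suc k) - xs k) \<noteq> 0"
    proof
      assume "ws (Suc k) \<bullet> (xs (Suc k) - xs k) = 0"
      then have "cr (ws k) (ws (Suc k)) = 0" by (rule perp_parallel[OF c0 _ d0])
      then show False by (rule nopar)
    qed
    then show ?thesis using le by simp
  qed
  have e2: "ws k \<bullet> (xs (Suc (Suc k)) - xs (Suc k)) > 0" for k
  proof -
    have "ws k \<bullet> xs (Suc k) \<le> ws k \<bullet> xs (Suc (Suc k))" using b2[of k] xsB by blast
    then have le: "ws k \<bullet> (xs (Suc (Suc k)) - xs (Suc k)) \<ge> 0" by (simp add: inner_diff_right)
    have "ws k \<bullet> (xs (Suc (Suc k)) - xs (Suc k)) \<noteq> 0"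
    proof
      assume "ws k \<bullet> (xs (Suc (Suc k)) - xs (Suc k)) = 0"
      then have "cr (ws k) (ws (Suc k)) = 0" by (rule perp_parallel[OF _ c0 d0])
      then show False by (rule nopar)
    qed
    then show ?thesis using le by simp
  qed
  define cc where "cc k = cr (ws k) (ws (Suc k))" for k
  have i1: "cr (ws k) (xs (Suc k) - xs k) * cc k < 0" for k
  proof -
    have "(ws k \<bullet> ws k) * (ws (Suc k) \<bullet> (xs (Suc k) - xs k)) = cr (ws k) (xs (Suc k) - xs k) * cc k"
      unfolding cc_def by (rule perp_identity[OF c0])
    moreover have "(ws k \<bullet> ws k) * (ws (Suc k) \<bullet> (xs (Suc k) - xs k)) < 0"
      using e1 a1 by (simp add: mult_pos_neg)
    ultimately show ?thesis by simp
  qed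
  have i2: "cr (ws (Suc k)) (xs (Suc (Suc k)) - xs (Suc k)) * cc k < 0" for k
  proof -
    have "(ws (Suc k) \<bullet> ws (Suc k)) * (ws k \<bullet> (xs (Suc (Suc k)) - xs (Suc k))) =
        cr (ws (Suc k)) (xs (Suc (Suc k)) - xs (Suc k)) * cr (ws (Suc k)) (ws k)"
      by (rule perp_identity[OF c0])
    moreover have "(ws (Suc k) \<bullet> ws (Suc k)) * (ws k \<bullet> (xs (Suc (Suc k)) - xs (Suc k))) > 0"
      using e2 a1 by simp
    ultimately show ?thesis unfolding cc_def by (simp add: cr_anti[of "ws (Suc k)" "ws k"])
  qed
  have samesign: "cc k * cc (Suc k) > 0" for k
  proof -
    define q where "q = cr (ws (Suc k)) (xs (Suc (Suc k)) - xs (Suc k))"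
    have 1: "q * cc k < 0" using i2 unfolding q_def .
    have 2: "q * cc (Suc k) < 0" using i1[of "Suc k"] unfolding q_def .
    have "(q * cc k) * (q * cc (Suc k)) > 0" using 1 2 by (simp add: mult_neg_neg)
    then have "(q * q) * (cc k * cc (Suc k)) > 0" by (simp add: algebra_simps)
    then show ?thesis by (metis zero_less_mult_iff not_square_less_zero)
  qed
  have orient: "(\<forall>k. cr (ws k) (ws (Suc k)) > 0) \<or> (\<forall>k. cr (ws k) (ws (Suc k)) < 0)"
  proof (cases "cc 0 > 0")
    case True
    have "cc k > 0" for k
    proof (induction k)
      case 0 then show ?case using True by simp
    next
      case (Suc k) then show ?case using samesign[of k] by (metis zero_less_mult_pos)
    qed
    then show ?thesis unfolding cc_def by blast
  next
    case False
    then have neg0: "cc 0 < 0" using samesign[of 0] by (metis linorder_neqE_linordered_idom mult_zero_left less_irrefl)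
    have "cc k < 0" for k
    proof (induction k)
      case 0 then show ?case using neg0 by simp
    next
      case (Suc k) then show ?case using samesign[of k]
        by (auto simp: zero_less_mult_iff)
    qed
    then show ?thesis unfolding cc_def by blast
  qed
  have "\<not> inj_on xs {0..card X}"
  proof
    assume inj: "inj_on xs {0..card X}"
    have "xs ` {0..card X} \<subseteq> X" using xsX by blast
    then have "card (xs ` {0..card X}) \<le> card X" using B XB finite_subset card_mono by metis
    moreover have "card (xs ` {0..card X}) = Suc (card X)" using card_image[OF inj] by simp
    ultimately show False by simp
  qed
  then obtain i j where ij: "i \<noteq> j" "xs i = xs j" unfolding inj_on_def by blast
  obtain i j where ij: "i < j" "xs i = xs j"
    using ij by (metis linorder_neqE_nat)
  have shift: "xs (i + t) = xs (j + t)" for t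
    by (induction t) (simp_all add: ij(2) xsS)
  define p where "p = j - i"
  have p0: "p > 0" using ij by (simp add: p_def)
  have per: "\<forall>k\<ge>i. ws (k + p) = ws k"
  proof (intro allI impI)
    fix k assume "k \<ge> i"
    then obtain t where t: "k = i + t" using le_Suc_ex by blast
    have kp: "k + p = j + t" using t ij by (simp add: p_def)
    have "xs (k + p) = xs (j + t)" by (simp only: kp)
    also have "\<dots> = xs (i + t)" using shift[of t] by simp
    also have "\<dots> = xs k" using t by simp
    finally have "xs (k + p) = xs k" .
    then show "ws (k + p) = ws k" unfolding ws_def by simp
  qed
  obtain z where z: "z \<noteq> 0" "\<forall>c\<in>B. z \<bullet> y \<le> z \<bullet> c" using H2 y by blast
  obtain k \<alpha> \<beta> where k: "k \<ge> i" "\<alpha> \<ge> 0" "\<beta> \<ge> 0" "z = \<alpha> *\<^sub>R ws k + \<beta> *\<^sub>R ws (Suc k)"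
    using covering[OF per p0 orient z(1)] by blast
  define x' where "x' = xs (Suc k)"
  have x'B: "x' \<in> B" unfolding x'_def using xsB .
  have u1: "ws k \<bullet> x' \<le> ws k \<bullet> y" using b2 y unfolding x'_def by blast
  have u2: "ws (Suc k) \<bullet> x' \<le> ws (Suc k) \<bullet> y" using a3[of "Suc k"] y unfolding x'_def by blast
  have "z \<bullet> y \<le> z \<bullet> x'" using z(2) x'B by blast
  then have "\<alpha> * (ws k \<bullet> y - ws k \<bullet> x') + \<beta> * (ws (Suc k) \<bullet> y - ws (Suc k) \<bullet> x') \<le> 0"
    unfolding k(4) by (simp add: inner_add_left algebra_simps)
  moreover have "\<alpha> * (ws k \<bullet> y - ws k \<bullet> x') \<ge> 0" using k(2) u1 by simp
  moreover have "\<beta> * (ws (Suc k) \<bullet> y - ws (Suc k) \<bullet> x') \<ge> 0" using k(3) u2 by simp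
  ultimately have z1: "\<alpha> * (ws k \<bullet> y - ws k \<bullet> x') = 0" and z2: "\<beta> * (ws (Suc k) \<bullet> y - ws (Suc k) \<bullet> x') = 0"
    by linarith+
  have "\<alpha> \<noteq> 0 \<or> \<beta> \<noteq> 0" using z(1) k(4) by auto
  then have "y \<in> X"
  proof
    assume "\<alpha> \<noteq> 0"
    then have "ws k \<bullet> y = ws k \<bullet> x'" using z1 by simp
    also have "\<dots> = ws k \<bullet> xs k" using c0[of k] unfolding x'_def by (simp add: inner_diff_right)
    finally show "y \<in> X" using a4[of k] y by blast
  next
    assume "\<beta> \<noteq> 0"
    then have "ws (Suc k) \<bullet> y = ws (Suc k) \<bullet> xs (Suc k)" using z2 unfolding x'_def by simp
    then show "y \<in> X" using a4[of "Suc k"] y by blast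
  qed
  then show False using yX by blast
qed

definition net :: "2 reaction set \<Rightarrow> (2 reaction \<Rightarrow> real) \<Rightarrow> real^2 \<Rightarrow> real^2" where
  "net E K b = (\<Sum>e\<in>{e\<in>E. fst e = b}. K e *\<^sub>R rvec e)"

locale srn =
  fixes E :: "2 reaction set"
  assumes RN: "reaction_network E" and SE: "strongly_endotactic E"
    and D: "dim (stoich_subspace E) = 2"
begin

abbreviation "S \<equiv> fst ` E"
abbreviation "P \<equiv> convex hull S"
abbreviation "Bd \<equiv> S \<inter> frontier P"

lemma finE: "finite E" using RN by (simp add: reaction_network_def)
lemma finS: "finite S" using finE by simp
lemma finBd: "finite Bd" using finS by simp

lemma P1:
  assumes b: "\<forall>s\<in>S. w \<bullet> b \<le> w \<bullet> s" and e: "e \<in> E" "fst e = b"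
  shows "0 \<le> w \<bullet> rvec e"
proof (rule ccontr)
  assume "\<not> 0 \<le> w \<bullet> rvec e"
  then have neg: "w \<bullet> rvec e < 0" by simp
  have "\<exists>ej\<in>E. w \<bullet> (fst ej - fst e) < 0 \<and> w \<bullet> rvec ej > 0 \<and> (\<forall>ek\<in>E. w \<bullet> (fst ej - fst ek) \<le> 0)"
    using SE e(1) neg unfolding strongly_endotactic_def by blast
  then obtain ej where ej: "ej \<in> E" "w \<bullet> (fst ej - fst e) < 0" by blast
  have "w \<bullet> b \<le> w \<bullet> fst ej" using b ej(1) by blast
  then show False using ej(2) e(2) by (simp add: inner_diff_right)
qed

lemma span_nz:
  assumes "w \<noteq> 0"
  shows "\<exists>e\<in>E. w \<bullet> rvec e \<noteq> 0"
proof (rule ccontr)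
  assume "\<not> ?thesis"
  then have orth: "\<And>y. y \<in> rvec ` E \<Longrightarrow> orthogonal w y" by (auto simp: orthogonal_def)
  have "dim (rvec ` E) = DIM(real^2)" using D by (simp add: stoich_subspace_def)
  then have "span (rvec ` E) = UNIV" using dim_eq_full by blast
  then have "orthogonal w w" using orthogonal_to_span[OF _ orth] by blast
  then show False using assms by (simp add: orthogonal_def)
qed

lemma P2:
  assumes "w \<noteq> 0"
  shows "\<exists>u\<in>S. (\<forall>s\<in>S. w \<bullet> u \<le> w \<bullet> s) \<and> (\<exists>e\<in>E. fst e = u \<and> w \<bullet> rvec e > 0)"
proof -
  obtain e0 where e0: "e0 \<in> E" "w \<bullet> rvec e0 \<noteq> 0" using span_nz[OF assms] by blast
  have "\<exists>e1\<in>E. w \<bullet> rvec e1 < 0"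
  proof (cases "w \<bullet> rvec e0 < 0")
    case True then show ?thesis using e0 by blast
  next
    case False
    then have "(- w) \<bullet> rvec e0 < 0" using e0(2) by simp
    then obtain ej where "ej \<in> E" "(- w) \<bullet> rvec ej > 0"
      using SE e0(1) unfolding strongly_endotactic_def by blast
    then show ?thesis by (intro bexI[of _ ej]) auto
  qed
  then obtain e1 where e1: "e1 \<in> E" "w \<bullet> rvec e1 < 0" by blast
  then obtain ej where ej: "ej \<in> E" "w \<bullet> rvec ej > 0" "\<forall>ek\<in>E. w \<bullet> (fst ej - fst ek) \<le> 0"
    using SE unfolding strongly_endotactic_def by blast
  have "\<forall>s\<in>S. w \<bullet> fst ej \<le> w \<bullet> s" using ej(3) by (auto simp: inner_diff_right)
  then show ?thesis using ej by blast
qed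

lemma net_nonneg:
  assumes K: "rate_constants E K" and b: "\<forall>s\<in>S. w \<bullet> b \<le> w \<bullet> s"
  shows "\<forall>e\<in>{e\<in>E. fst e = b}. 0 \<le> K e * (w \<bullet> rvec e)"
proof
  fix e assume e: "e \<in> {e\<in>E. fst e = b}"
  have "0 \<le> w \<bullet> rvec e" using P1[OF b] e by blast
  moreover have "0 < K e" using K e by (simp add: rate_constants_def)
  ultimately show "0 \<le> K e * (w \<bullet> rvec e)" by simp
qed

lemma inner_net: "w \<bullet> net E K b = (\<Sum>e\<in>{e\<in>E. fst e = b}. K e * (w \<bullet> rvec e))"
  unfolding net_def by (simp add: inner_sum_right)

lemma net_pos:
  assumes K: "rate_constants E K" and b: "\<forall>s\<in>S. w \<bullet> b \<le> w \<bullet> s"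
    and e: "e \<in> E" "fst e = b" "w \<bullet> rvec e > 0"
  shows "w \<bullet> net E K b > 0"
  unfolding inner_net
proof (rule sum_pos2)
  show "finite {e \<in> E. fst e = b}" using finE by simp
  show "e \<in> {e \<in> E. fst e = b}" using e by simp
  show "0 < K e * (w \<bullet> rvec e)" using K e by (simp add: rate_constants_def)
  show "\<And>i. i \<in> {e \<in> E. fst e = b} \<Longrightarrow> 0 \<le> K i * (w \<bullet> rvec i)"
    using net_nonneg[OF K b] by blast
qed

lemma net_ge:
  assumes K: "rate_constants E K" and b: "\<forall>s\<in>S. w \<bullet> b \<le> w \<bullet> s"
  shows "w \<bullet> net E K b \<ge> 0"
  unfolding inner_net using net_nonneg[OF K b] by (intro sum_nonneg) blast

lemma net_zero_iff:
  assumes K: "rate_constants E K" and b: "\<forall>s\<in>S. w \<bullet> b \<le> w \<bullet> s"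
  shows "w \<bullet> net E K b = 0 \<longleftrightarrow> (\<forall>e\<in>E. fst e = b \<longrightarrow> w \<bullet> rvec e = 0)"
proof -
  have "w \<bullet> net E K b = 0 \<longleftrightarrow> (\<forall>e\<in>{e\<in>E. fst e = b}. K e * (w \<bullet> rvec e) = 0)"
    unfolding inner_net using net_nonneg[OF K b] finE by (intro sum_nonneg_eq_0_iff) auto
  also have "\<dots> \<longleftrightarrow> (\<forall>e\<in>E. fst e = b \<longrightarrow> w \<bullet> rvec e = 0)"
  proof -
    have "K e \<noteq> 0" if "e \<in> E" for e using K that unfolding rate_constants_def by (metis less_irrefl)
    then show ?thesis by auto
  qed
  finally show ?thesis .
qed

lemma H1:
  assumes w: "w \<noteq> 0" and u: "u \<in> S" "\<forall>s\<in>S. w \<bullet> u \<le> w \<bullet> s"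
  shows "u \<in> frontier P"
proof -
  have sub: "P \<subseteq> {p. w \<bullet> u \<le> w \<bullet> p}"
    using u(2) by (intro hull_minimal) (auto simp: convex_halfspace_ge)
  have uP: "u \<in> P" using u(1) by (rule hull_inc)
  have "u \<notin> interior P"
  proof
    assume "u \<in> interior P"
    then obtain \<epsilon> where \<epsilon>: "\<epsilon> > 0" "ball u \<epsilon> \<subseteq> P" using mem_interior by blast
    define q where "q = u - (\<epsilon> / 2 / norm w) *\<^sub>R w"
    have "dist u q = \<epsilon> / 2" using w \<epsilon>(1) by (simp add: q_def dist_norm)
    then have "q \<in> P" using \<epsilon> by auto
    then have "w \<bullet> u \<le> w \<bullet> q" using sub by blast
    moreover have "w \<bullet> q = w \<bullet> u - (\<epsilon> / 2 / norm w) * (w \<bullet> w)"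
      by (simp add: q_def inner_diff_right)
    moreover have "(\<epsilon> / 2 / norm w) * (w \<bullet> w) > 0" using w \<epsilon>(1) by simp
    ultimately show False by simp
  qed
  then show ?thesis using uP closure_subset by (auto simp: frontier_def)
qed

lemma exmin:
  assumes "finite A" "A \<noteq> {}"
  shows "\<exists>s0\<in>A. \<forall>s\<in>A. (w::real^2) \<bullet> s0 \<le> w \<bullet> s"
proof -
  define m where "m = Min ((\<lambda>s. w \<bullet> s) ` A)"
  have "m \<in> (\<lambda>s. w \<bullet> s) ` A" unfolding m_def using assms by (intro Min_in) auto
  then obtain s0 where "s0 \<in> A" "m = w \<bullet> s0" by blast
  moreover have "\<forall>s\<in>A. m \<le> w \<bullet> s" unfolding m_def using assms by auto
  ultimately show ?thesis by auto
qed

lemma H1':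
  assumes b: "b \<in> Bd" and m: "\<forall>c\<in>Bd. w \<bullet> b \<le> w \<bullet> c"
  shows "\<forall>s\<in>S. w \<bullet> b \<le> w \<bullet> s"
proof (cases "w = 0")
  case True then show ?thesis by simp
next
  case False
  have "S \<noteq> {}" using b by blast
  then obtain s0 where s0: "s0 \<in> S" "\<forall>s\<in>S. w \<bullet> s0 \<le> w \<bullet> s" using exmin[OF finS] by blast
  have "s0 \<in> Bd" using H1[OF False s0] s0(1) by blast
  then have "w \<bullet> b \<le> w \<bullet> s0" using m by blast
  then show ?thesis using s0(2) by force
qed

lemma H2:
  assumes y: "y \<in> Bd"
  shows "\<exists>w. w \<noteq> 0 \<and> (\<forall>c\<in>Bd. w \<bullet> y \<le> w \<bullet> c)"
proof (cases "affine hull P = UNIV")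
  case True
  have cl: "closure P = P" using finS by (simp add: compact_imp_closed finite_imp_compact_convex_hull)
  have "y \<notin> interior P" using y by (simp add: frontier_def)
  then have yr: "y \<notin> rel_interior P" using rel_interior_interior[OF True] by simp
  have yc: "y \<in> closure P"
  proof -
    have "y \<in> S" using y by blast
    then have "y \<in> P" by (rule hull_inc)
    then show ?thesis using closure_subset by blast
  qed
  obtain a where a: "a \<noteq> 0" "\<And>p. p \<in> closure P \<Longrightarrow> a \<bullet> y \<le> a \<bullet> p"
    and "\<And>p. p \<in> rel_interior P \<Longrightarrow> a \<bullet> y < a \<bullet> p"
    by (rule supporting_hyperplane_relative_frontier[OF convex_convex_hull yc yr]) blast
  have "\<forall>c\<in>Bd. a \<bullet> y \<le> a \<bullet> c"
  proof
    fix c assume "c \<in> Bd"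
    then have "c \<in> S" by blast
    then have "c \<in> P" by (rule hull_inc)
    then show "a \<bullet> y \<le> a \<bullet> c" using a(2) closure_subset by blast
  qed
  then show ?thesis using a(1) by blast
next
  case False
  then have "aff_dim P \<noteq> DIM(real^2)" using aff_dim_eq_full by blast
  then have "aff_dim P < DIM(real^2)" using aff_dim_le_DIM[of P] by linarith
  then obtain a r where a: "a \<noteq> 0" "P \<subseteq> {x. a \<bullet> x = r}" by (rule aff_lowdim_subset_hyperplane)
  have "\<forall>c\<in>Bd. a \<bullet> y \<le> a \<bullet> c"
  proof
    fix c assume "c \<in> Bd"
    then have "c \<in> S" "y \<in> S" using y by blast+
    then have "c \<in> P" "y \<in> P" by (simp_all add: hull_inc)
    then have "a \<bullet> c = r" "a \<bullet> y = r" using a(2) by blast+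
    then show "a \<bullet> y \<le> a \<bullet> c" by simp
  qed
  then show ?thesis using a(1) by blast
qed

lemma memb:
  assumes K: "rate_constants E K" and b: "b \<in> Bd"
  shows "net E K b \<in> cone_of Bd b"
proof (rule ccontr)
  assume "net E K b \<notin> cone_of Bd b"
  then obtain w where w: "w \<bullet> net E K b < 0" "\<forall>c\<in>Bd. 0 \<le> w \<bullet> (c - b)"
    using farkas[OF finBd] by blast
  have "\<forall>c\<in>Bd. w \<bullet> b \<le> w \<bullet> c" using w(2) by (simp add: inner_diff_right)
  then have "\<forall>s\<in>S. w \<bullet> b \<le> w \<bullet> s" by (rule H1'[OF b])
  then show False using net_ge[OF K] w(1) by force
qed

lemma usable_indep:
  assumes K: "rate_constants E K" and K': "rate_constants E K'" and b: "b \<in> Bd"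
    and c: "c \<in> Bd" "c \<noteq> b"
  shows "usable Bd b (net E K b) c \<longleftrightarrow> usable Bd b (net E K' b) c"
proof -
  have eq: "w \<bullet> net E K b = 0 \<longleftrightarrow> w \<bullet> net E K' b = 0" if w: "\<forall>c'\<in>Bd. 0 \<le> w \<bullet> (c' - b)" for w
  proof -
    have "\<forall>c\<in>Bd. w \<bullet> b \<le> w \<bullet> c" using w by (simp add: inner_diff_right)
    then have m: "\<forall>s\<in>S. w \<bullet> b \<le> w \<bullet> s" by (rule H1'[OF b])
    show ?thesis using net_zero_iff[OF K m] net_zero_iff[OF K' m] by simp
  qed
  show ?thesis
    unfolding char[OF finBd memb[OF K b] c] char[OF finBd memb[OF K' b] c] using eq by blast
qed

end

context srn
begin

definition eb :: "real^2 \<Rightarrow> 2 reaction" where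
  "eb b = (SOME e. e \<in> E \<and> fst e = b)"

definition K0 :: "2 reaction \<Rightarrow> real" where
  "K0 e = (if (\<Sum>e'\<in>{e'\<in>E. fst e' = fst e}. rvec e') = 0 \<and> e = eb (fst e) then 2 else 1)"

lemma K0_pos: "rate_constants E K0"
  by (simp add: rate_constants_def K0_def)

lemma rvec_nz: "e \<in> E \<Longrightarrow> rvec e \<noteq> 0"
  using RN by (auto simp: reaction_network_def rvec_def)

lemma net_K0_nz:
  assumes b: "b \<in> S"
  shows "net E K0 b \<noteq> 0"
proof -
  define A where "A = {e\<in>E. fst e = b}"
  define \<sigma> where "\<sigma> = (\<Sum>e\<in>A. rvec e)"
  have ebA: "eb b \<in> A" unfolding A_def eb_def using b by (metis (mono_tags, lifting) imageE mem_Collect_eq someI_ex)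
  have fA: "finite A" unfolding A_def using finE by simp
  have "net E K0 b = (\<Sum>e\<in>A. rvec e + (if \<sigma> = 0 \<and> e = eb b then rvec e else 0))"
    unfolding net_def A_def[symmetric]
  proof (rule sum.cong[OF refl])
    fix e assume e: "e \<in> A"
    then have "fst e = b" unfolding A_def by simp
    then show "K0 e *\<^sub>R rvec e = rvec e + (if \<sigma> = 0 \<and> e = eb b then rvec e else 0)"
      unfolding K0_def \<sigma>_def A_def by (simp add: scaleR_2)
  qed
  also have "\<dots> = \<sigma> + (\<Sum>e\<in>A. if \<sigma> = 0 \<and> e = eb b then rvec e else 0)"
    unfolding \<sigma>_def by (simp add: sum.distrib)
  also have "(\<Sum>e\<in>A. if \<sigma> = 0 \<and> e = eb b then rvec e else 0) = (if \<sigma> = 0 then rvec (eb b) else 0)"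
  proof (cases "\<sigma> = 0")
    case True then show ?thesis using fA ebA by (simp add: sum.delta')
  next
    case False then show ?thesis by simp
  qed
  finally have "net E K0 b = \<sigma> + (if \<sigma> = 0 then rvec (eb b) else 0)" .
  moreover have "rvec (eb b) \<noteq> 0" using ebA rvec_nz unfolding A_def by blast
  ultimately show ?thesis by (cases "\<sigma> = 0") auto
qed

definition E1 :: "2 reaction set" where
  "E1 = {(b,c). b \<in> Bd \<and> c \<in> Bd \<and> c \<noteq> b \<and> usable Bd b (net E K0 b) c}"

definition Eint :: "2 reaction set" where
  "Eint = {e\<in>E. fst e \<notin> frontier P}"

definition E2 :: "2 reaction set" where
  "E2 = E1 \<union> Eint"

lemma E1_sub: "E1 \<subseteq> Bd \<times> Bd" unfolding E1_def by auto

lemma finE1: "finite E1" using finite_subset[OF E1_sub] finBd by auto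

lemma finEint: "finite Eint" unfolding Eint_def using finE by simp

lemma wr_E1: "weakly_reversible E1"
  unfolding weakly_reversible_def
proof
  fix e assume e: "e \<in> E1"
  then have "e \<in> Bd \<times> Bd" using E1_sub by blast
  then have sB: "fst e \<in> Bd" and tB: "snd e \<in> Bd" by (auto simp: mem_Times_iff)
  have P2': "\<forall>w. w \<noteq> 0 \<longrightarrow> (\<exists>u\<in>Bd. (\<forall>c\<in>Bd. w \<bullet> u \<le> w \<bullet> c) \<and> w \<bullet> net E K0 u > 0)"
  proof (intro allI impI)
    fix w :: "real^2" assume w: "w \<noteq> 0"
    obtain u e' where u: "u \<in> S" "\<forall>s\<in>S. w \<bullet> u \<le> w \<bullet> s" "e' \<in> E" "fst e' = u" "w \<bullet> rvec e' > 0"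
      using P2[OF w] by blast
    have "u \<in> Bd" using H1[OF w u(1,2)] u(1) by blast
    moreover have "\<forall>c\<in>Bd. w \<bullet> u \<le> w \<bullet> c" using u(2) by blast
    moreover have "w \<bullet> net E K0 u > 0" by (rule net_pos[OF K0_pos u(2) u(3,4,5)])
    ultimately show "\<exists>u\<in>Bd. (\<forall>c\<in>Bd. w \<bullet> u \<le> w \<bullet> c) \<and> w \<bullet> net E K0 u > 0" by blast
  qed
  have "(snd e, fst e) \<in> E1\<^sup>*"
  proof (rule wr_graph[where n = "net E K0" and B = Bd])
    show "finite Bd" by (rule finBd)
    show "\<forall>x\<in>Bd. net E K0 x \<noteq> 0" using net_K0_nz by blast
    show "\<forall>x\<in>Bd. net E K0 x \<in> cone_of Bd x" using memb[OF K0_pos] by blast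
    show "\<forall>w. w \<noteq> 0 \<longrightarrow> (\<exists>u\<in>Bd. (\<forall>c\<in>Bd. w \<bullet> u \<le> w \<bullet> c) \<and> w \<bullet> net E K0 u > 0)" by (rule P2')
    show "\<forall>y\<in>Bd. \<exists>w. w \<noteq> 0 \<and> (\<forall>c\<in>Bd. w \<bullet> y \<le> w \<bullet> c)" using H2 by blast
    show "E1 = {(x, c). x \<in> Bd \<and> c \<in> Bd \<and> c \<noteq> x \<and> usable Bd x (net E K0 x) c}" by (rule E1_def)
    show "snd e \<in> Bd" by (rule tB)
    show "fst e \<in> Bd" by (rule sB)
  qed
  then show "(snd e, fst e) \<in> E1\<^sup>*" .
qed

lemma E1_out:
  assumes b: "b \<in> Bd"
  shows "\<exists>c. (b, c) \<in> E1"
proof -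
  obtain l where l: "\<forall>c. 0 \<le> l c" "net E K0 b = (\<Sum>c\<in>Bd. l c *\<^sub>R (c - b))"
    using memb[OF K0_pos b] by (auto simp: cone_of_def)
  have "\<exists>c\<in>Bd. l c *\<^sub>R (c - b) \<noteq> 0"
  proof (rule ccontr)
    assume "\<not> ?thesis"
    then have "(\<Sum>c\<in>Bd. l c *\<^sub>R (c - b)) = 0" by (intro sum.neutral) blast
    then show False using l(2) net_K0_nz b by auto
  qed
  then obtain c where c: "c \<in> Bd" "l c *\<^sub>R (c - b) \<noteq> 0" by blast
  have "l c > 0" using c(2) l(1) by (metis less_eq_real_def scaleR_zero_left)
  moreover have "c \<noteq> b" using c(2) by auto
  ultimately have "usable Bd b (net E K0 b) c" unfolding usable_def using l by blast
  then show ?thesis using b c(1) \<open>c \<noteq> b\<close> unfolding E1_def by blast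
qed

lemma src_E2: "fst ` E2 = S"
proof
  show "fst ` E2 \<subseteq> S" unfolding E2_def Eint_def using E1_sub by auto
next
  show "S \<subseteq> fst ` E2"
  proof
    fix s assume s: "s \<in> S"
    show "s \<in> fst ` E2"
    proof (cases "s \<in> frontier P")
      case True
      then obtain c where "(s, c) \<in> E1" using E1_out s by blast
      then show ?thesis unfolding E2_def by force
    next
      case False
      obtain e where "e \<in> E" "fst e = s" using s by blast
      then show ?thesis using False unfolding E2_def Eint_def by force
    qed
  qed
qed

lemma extremal_E2: "extremal_reactions E2 = E1"
proof -
  have ec: "extreme_complexes E2 = Bd"
    unfolding extreme_complexes_def source_complexes_def src_E2 by simp
  have "extremal_reactions E2 = {e\<in>E2. fst e \<in> Bd}" unfolding extremal_reactions_def ec ..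
  also have "\<dots> = E1"
  proof
    show "{e\<in>E2. fst e \<in> Bd} \<subseteq> E1" unfolding E2_def Eint_def by auto
    show "E1 \<subseteq> {e\<in>E2. fst e \<in> Bd}"
    proof
      fix e assume e: "e \<in> E1"
      then have "e \<in> Bd \<times> Bd" using E1_sub by blast
      then show "e \<in> {e\<in>E2. fst e \<in> Bd}" using e unfolding E2_def by (auto simp: mem_Times_iff)
    qed
  qed
  finally show ?thesis .
qed

lemma S_nonneg: "s \<in> S \<Longrightarrow> nonneg_vec s"
  using RN by (auto simp: reaction_network_def)

lemma rn_E2: "reaction_network E2"
proof -
  have f: "finite E2" unfolding E2_def using finE1 finEint by simp
  have "S \<noteq> {}" using RN by (simp add: reaction_network_def)
  then have ne: "E2 \<noteq> {}" using src_E2 by auto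
  have "fst e \<noteq> snd e \<and> nonneg_vec (fst e) \<and> nonneg_vec (snd e)" if e: "e \<in> E2" for e
  proof (cases "e \<in> E1")
    case True
    then obtain b c where bc: "e = (b, c)" "b \<in> Bd" "c \<in> Bd" "c \<noteq> b" unfolding E1_def by blast
    have "nonneg_vec b" by (rule S_nonneg) (use bc in blast)
    moreover have "nonneg_vec c" by (rule S_nonneg) (use bc in blast)
    ultimately show ?thesis using bc by simp
  next
    case False
    then have "e \<in> E" using e unfolding E2_def Eint_def by auto
    then show ?thesis using RN by (simp add: reaction_network_def)
  qed
  then show ?thesis unfolding reaction_network_def using f ne by blast
qed

lemma gen_split:
  "gen_system E K x = (\<Sum>b\<in>Bd. monom x b *\<^sub>R net E K b) + (\<Sum>e\<in>Eint. (K e * monom x (fst e)) *\<^sub>R rvec e)"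
proof -
  define h where "h e = (K e * monom x (fst e)) *\<^sub>R rvec e" for e
  define EB where "EB = {e\<in>E. fst e \<in> Bd}"
  have split: "E = EB \<union> Eint" "EB \<inter> Eint = {}"
    unfolding EB_def Eint_def by auto
  have fEB: "finite EB" unfolding EB_def using finE by simp
  have "gen_system E K x = sum h EB + sum h Eint"
    unfolding gen_system_def h_def[symmetric] using split fEB finEint
    by (metis sum.union_disjoint)
  moreover have "sum h EB = (\<Sum>b\<in>Bd. sum h {e\<in>EB. fst e = b})"
  proof -
    have img: "fst ` EB \<subseteq> Bd" unfolding EB_def by auto
    show ?thesis using sum.group[OF fEB finBd img, of h] by simp
  qed
  moreover have "sum h {e\<in>EB. fst e = b} = monom x b *\<^sub>R net E K b" if b: "b \<in> Bd" for b
  proof -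
    have "{e\<in>EB. fst e = b} = {e\<in>E. fst e = b}" unfolding EB_def using b by auto
    then show ?thesis unfolding net_def h_def scaleR_sum_right
      by (intro sum.cong) (auto simp: mult.commute)
  qed
  ultimately show ?thesis unfolding h_def by simp
qed

definition lamK :: "(2 reaction \<Rightarrow> real) \<Rightarrow> real^2 \<Rightarrow> real^2 \<Rightarrow> real" where
  "lamK K b = (SOME l. (\<forall>c. 0 \<le> l c) \<and> net E K b = (\<Sum>c\<in>Bd. l c *\<^sub>R (c - b)) \<and>
             (\<forall>c\<in>Bd. c \<noteq> b \<longrightarrow> (0 < l c \<longleftrightarrow> usable Bd b (net E K b) c)))"

lemma lamK:
  assumes K: "rate_constants E K" and b: "b \<in> Bd"
  shows "(\<forall>c. 0 \<le> lamK K b c) \<and> net E K b = (\<Sum>c\<in>Bd. lamK K b c *\<^sub>R (c - b)) \<and>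
             (\<forall>c\<in>Bd. c \<noteq> b \<longrightarrow> (0 < lamK K b c \<longleftrightarrow> usable Bd b (net E K b) c))"
  unfolding lamK_def using averaging[OF finBd memb[OF K b]] by (rule someI_ex)

definition K2 :: "(2 reaction \<Rightarrow> real) \<Rightarrow> 2 reaction \<Rightarrow> real" where
  "K2 K e = (if e \<in> E1 then lamK K (fst e) (snd e) else K e)"

lemma K2_pos:
  assumes K: "rate_constants E K"
  shows "rate_constants E2 (K2 K)"
  unfolding rate_constants_def
proof
  fix e assume e: "e \<in> E2"
  show "0 < K2 K e"
  proof (cases "e \<in> E1")
    case True
    then obtain b c where bc: "e = (b, c)" "b \<in> Bd" "c \<in> Bd" "c \<noteq> b" "usable Bd b (net E K0 b) c"
      unfolding E1_def by blast
    have "usable Bd b (net E K b) c" using usable_indep[OF K K0_pos bc(2,3,4)] bc(5) by blast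
    then show ?thesis using lamK[OF K bc(2)] bc True by (simp add: K2_def)
  next
    case False
    then have "e \<in> E" using e unfolding E2_def Eint_def by auto
    then show ?thesis using K False by (simp add: K2_def rate_constants_def)
  qed
qed

lemma gen_E2:
  assumes K: "rate_constants E K"
  shows "gen_system E2 (K2 K) x = gen_system E K x"
proof -
  define h where "h e = (K2 K e * monom x (fst e)) *\<^sub>R rvec e" for e
  have disj: "E1 \<inter> Eint = {}" unfolding E1_def Eint_def by auto
  have "gen_system E2 (K2 K) x = sum h E1 + sum h Eint"
    unfolding gen_system_def h_def[symmetric] E2_def using disj finE1 finEint
    by (metis sum.union_disjoint)
  moreover have "sum h Eint = (\<Sum>e\<in>Eint. (K e * monom x (fst e)) *\<^sub>R rvec e)"
    unfolding h_def K2_def using disj by (intro sum.cong) auto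
  moreover have "sum h E1 = (\<Sum>b\<in>Bd. monom x b *\<^sub>R net E K b)"
  proof -
    define Ob where "Ob b = {c\<in>Bd. c \<noteq> b \<and> usable Bd b (net E K0 b) c}" for b
    have E1S: "E1 = Sigma Bd Ob" unfolding E1_def Ob_def by auto
    have fOb: "\<forall>b\<in>Bd. finite (Ob b)"
    proof
      fix b show "finite (Ob b)" unfolding Ob_def by (rule finite_subset[OF _ finBd]) blast
    qed
    have "(\<Sum>b\<in>Bd. \<Sum>c\<in>Ob b. h (b, c)) = (\<Sum>(b,c)\<in>Sigma Bd Ob. h (b, c))"
      by (rule sum.Sigma[OF finBd fOb])
    then have "sum h E1 = (\<Sum>b\<in>Bd. \<Sum>c\<in>Ob b. h (b, c))"
      unfolding E1S by (simp add: case_prod_eta)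
    also have "\<dots> = (\<Sum>b\<in>Bd. monom x b *\<^sub>R net E K b)"
    proof (rule sum.cong[OF refl])
      fix b assume b: "b \<in> Bd"
      have L: "(\<forall>c. 0 \<le> lamK K b c) \<and> net E K b = (\<Sum>c\<in>Bd. lamK K b c *\<^sub>R (c - b)) \<and>
             (\<forall>c\<in>Bd. c \<noteq> b \<longrightarrow> (0 < lamK K b c \<longleftrightarrow> usable Bd b (net E K b) c))"
        by (rule lamK[OF K b])
      have "(\<Sum>c\<in>Ob b. h (b, c)) = monom x b *\<^sub>R (\<Sum>c\<in>Ob b. lamK K b c *\<^sub>R (c - b))"
        unfolding scaleR_sum_right
      proof (rule sum.cong[OF refl])
        fix c assume c: "c \<in> Ob b"
        then have "(b, c) \<in> E1" unfolding E1S using b by blast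
        then show "h (b, c) = monom x b *\<^sub>R lamK K b c *\<^sub>R (c - b)"
          unfolding h_def K2_def by (simp add: rvec_def mult.commute)
      qed
      also have "(\<Sum>c\<in>Ob b. lamK K b c *\<^sub>R (c - b)) = (\<Sum>c\<in>Bd. lamK K b c *\<^sub>R (c - b))"
      proof (rule sum.mono_neutral_left[OF finBd])
        show "Ob b \<subseteq> Bd" unfolding Ob_def by blast
        show "\<forall>c\<in>Bd - Ob b. lamK K b c *\<^sub>R (c - b) = 0"
        proof
          fix c assume c: "c \<in> Bd - Ob b"
          show "lamK K b c *\<^sub>R (c - b) = 0"
          proof (cases "c = b")
            case True then show ?thesis by simp
          next
            case False
            have "\<not> usable Bd b (net E K0 b) c" using c False unfolding Ob_def by blast
            then have "\<not> usable Bd b (net E K b) c"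
              using usable_indep[OF K K0_pos b _ False] c by blast
            then have "\<not> 0 < lamK K b c" using L c False by blast
            moreover have "0 \<le> lamK K b c" using L by blast
            ultimately have "lamK K b c = 0" by simp
            then show ?thesis by simp
          qed
        qed
      qed
      also have "\<dots> = net E K b" using L by simp
      finally show "(\<Sum>c\<in>Ob b. h (b, c)) = monom x b *\<^sub>R net E K b" .
    qed
    finally show ?thesis .
  qed
  ultimately show ?thesis using gen_split[of K x] by simp
qed

end

theorem theorem5:
  fixes E :: "2 reaction set"
  assumes "reaction_network E"
    and "strongly_endotactic E"
    and "dim (stoich_subspace E) = 2"
  shows "((\<forall>s\<in>source_complexes E. s \<in> frontier (convex hull (source_complexes E))) \<longrightarrow>
            (\<exists>E'. reaction_network E' \<and> weakly_reversible E' \<and> realized_by E E'))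
         \<and> effectively_extremally_wr E"
proof -
  interpret srn E using assms by (unfold_locales)
  have real: "realized_by E E2"
    unfolding realized_by_def
  proof (intro allI impI)
    fix K assume K: "rate_constants E K"
    show "\<exists>K'. rate_constants E2 K' \<and> (\<forall>x. nonneg_vec x \<longrightarrow> gen_system E2 K' x = gen_system E K x)"
      using K2_pos[OF K] gen_E2[OF K] by blast
  qed
  have part1: "(\<forall>s\<in>source_complexes E. s \<in> frontier (convex hull (source_complexes E))) \<longrightarrow>
            (\<exists>E'. reaction_network E' \<and> weakly_reversible E' \<and> realized_by E E')"
  proof
    assume all: "\<forall>s\<in>source_complexes E. s \<in> frontier (convex hull (source_complexes E))"
    have "Eint = {}" using all unfolding Eint_def source_complexes_def by auto
    then have "E2 = E1" unfolding E2_def by simp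
    then show "\<exists>E'. reaction_network E' \<and> weakly_reversible E' \<and> realized_by E E'"
      using rn_E2 wr_E1 real by metis
  qed
  have part2: "effectively_extremally_wr E"
    unfolding effectively_extremally_wr_def
  proof (intro allI impI)
    fix K assume K: "rate_constants E K"
    have "extremally_weakly_reversible E2"
      unfolding extremally_weakly_reversible_def extremal_E2 by (rule wr_E1)
    then show "system_extremally_wr (gen_system E K)"
      unfolding system_extremally_wr_def using rn_E2 K2_pos[OF K] gen_E2[OF K] by blast
  qed
  show ?thesis using part1 part2 by blast
qed

end
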